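(* Consider the controlled impulsive system $\dot x(t)=Ax(t)+B_cu_c(t)$ for $t\ne t_k$, $x(t_k^+)=Jx(t_k)+B_du_d(t_k)$, with $A,J\in\mathbb{R}^{n\times n}$, $B_c\in\mathbb{R}^{n\times m_c}$, $B_d\in\mathbb{R}^{n\times m_d}$, and let $\bar T>0$. Assume there exist a continuously differentiable diagonal-matrix-valued function $X:[0,\bar T]\to\mathbb{D}^n$ with $X(\tau)$ nonsingular for all $\tau$ and $X(0)\in\mathbb{D}^n_{\succ0}$, a continuous $U:[0,\bar T]\to\mathbb{R}^{m_c\times n}$, a matrix $U_d\in\mathbb{R}^{m_d\times n}$ and scalars $\varepsilon,\alpha>0$ such that, for all $\tau\in[0,\bar T]$, $AX(\tau)+B_cU(\tau)+\alpha I_n\ge0$, $JX(\bar T)+B_dU_d\ge0$, $\big[-\dot X(\tau)+AX(\tau)+B_cU(\tau)\big]\mathbf{1}_n<0$ and $\big[JX(\bar T)+B_dU_d-X(0)+\varepsilon I_n\big]\mathbf{1}_n\le0$. Define $K_c(\tau)=U(\tau)X(\tau)^{-1}$ and $K_d=U_dX(\bar T)^{-1}$ and the controller $u_c(t_k+\tau)=K_c(\tau)x(t_k+\tau)$ for $\tau\in(0,\bar T]$, $u_d(t_k)=K_dx(t_k)$. Then $A+B_cK_c(\tau)$ is Metzler for all $\tau\in[0,\bar T]$, $J+B_dK_d$ is nonnegative, $\big[(J+B_dK_d)\Psi(\bar T)-I_n\big]X(0)\mathbf{1}_n<0$ where $\frac{d}{ds}\Psi(s)=(A+B_cK_c(s))\Psi(s)$,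 $\Psi(0)=I_n$, and the closed-loop system is positive and asymptotically stable under constant dwell-time $\bar T$.
   Context: $\mathbb{D}^n$ is the set of $n\times n$ diagonal matrices and $\mathbb{D}^n_{\succ0}$ those with positive diagonal entries. Matrix/vector inequalities are entrywise; $\mathbf{1}_n$ is the vector of ones. $x(t^+)=\lim_{s\downarrow t}x(s)$. A matrix is Metzler if its off-diagonal entries are nonnegative. Constant dwell-time $\bar T$ means $t_{k+1}-t_k=\bar T$ for all $k$; asymptotic stability means global asymptotic stability of the zero solution. *)

theory Defs
  imports "HOL-Analysis.Analysis"
begin

definition ones :: "real ^ 'n" where
  "ones = (\<chi> i. 1)"

definition diag_mat :: "real ^ 'n ^ 'n \<Rightarrow> bool" where
  "diag_mat M \<longleftrightarrow> (\<forall>i j. i \<noteq> j \<longrightarrow> M $ i $ j = 0)"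

definition pos_diag_mat :: "real ^ 'n ^ 'n \<Rightarrow> bool" where
  "pos_diag_mat M \<longleftrightarrow> diag_mat M \<and> (\<forall>i. M $ i $ i > 0)"

definition metzler :: "real ^ 'n ^ 'n \<Rightarrow> bool" where
  "metzler M \<longleftrightarrow> (\<forall>i j. i \<noteq> j \<longrightarrow> M $ i $ j \<ge> 0)"

definition nonneg_mat :: "real ^ 'c ^ 'r \<Rightarrow> bool" where
  "nonneg_mat M \<longleftrightarrow> (\<forall>i j. M $ i $ j \<ge> 0)"

definition nonneg_vec :: "real ^ 'n \<Rightarrow> bool" where
  "nonneg_vec v \<longleftrightarrow> (\<forall>i. v $ i \<ge> 0)"

text \<open>Solutions of the closed-loop impulsive system
  xdot(t) = A x(t) + Bc uc(t) for t \<noteq> t_k,  x(t_k^+) = J x(t_k) + Bd ud(t_k),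
  with constant dwell time T, impulse instants t_k = k T (k \<ge> 1), initial time t_0 = 0,
  and controller uc(t_k + \<tau>) = Kc(\<tau>) x(t_k + \<tau>) for \<tau> \<in> (0,T], ud(t_k) = Kd x(t_k).
  Trajectories are left-continuous on (t_k, t_{k+1}]; x(t_k) is the pre-jump value.\<close>
definition closed_loop_sol ::
  "real ^ 'n ^ 'n \<Rightarrow> real ^ 'mc ^ 'n \<Rightarrow> real ^ 'n ^ 'n \<Rightarrow> real ^ 'md ^ 'n \<Rightarrow>
   (real \<Rightarrow> real ^ 'n ^ 'mc) \<Rightarrow> real ^ 'n ^ 'md \<Rightarrow> real \<Rightarrow> (real \<Rightarrow> real ^ 'n) \<Rightarrow> bool" where
  "closed_loop_sol A Bc J Bd Kc Kd T x \<longleftrightarrow>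
     (\<forall>k::nat.
        continuous_on {real k * T <.. real (Suc k) * T} x \<and>
        (\<forall>s. real k * T < s \<and> s < real (Suc k) * T \<longrightarrow>
              (x has_vector_derivative (A *v x s + Bc *v (Kc (s - real k * T) *v x s))) (at s)) \<and>
        (x \<longlongrightarrow> (if k = 0 then x 0
                    else J *v x (real k * T) + Bd *v (Kd *v x (real k * T))))
          (at_right (real k * T)))"

definition closed_loop_positive where
  "closed_loop_positive A Bc J Bd Kc Kd T \<longleftrightarrow>
     (\<forall>x. closed_loop_sol A Bc J Bd Kc Kd T x \<and> nonneg_vec (x 0) \<longrightarrow>
          (\<forall>t\<ge>0. nonneg_vec (x t)))"

definition closed_loop_GAS where
  "closed_loop_GAS A Bc J Bd Kc Kd T \<longleftrightarrow>
     (\<forall>e>0. \<exists>d>0. \<forall>x. closed_loop_sol A Bc J Bd Kc Kd T x \<and> norm (x 0) < d \<longrightarrow>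
          (\<forall>t\<ge>0. norm (x t) < e)) \<and>
     (\<forall>x. closed_loop_sol A Bc J Bd Kc Kd T x \<longrightarrow> (x \<longlongrightarrow> 0) at_top)"

end

theory Submission
  imports Defs
begin

lemma comp_deriv:
  fixes y :: "real \<Rightarrow> real ^ 'n"
  assumes "(y has_vector_derivative y') F"
  shows "((\<lambda>s. y s $ i) has_real_derivative y' $ i) F"
  using bounded_linear.has_vector_derivative[OF bounded_linear_vec_nth assms]
  by (simp add: has_real_derivative_iff_has_vector_derivative)

lemma barrier_strict:
  fixes y v v' :: "real \<Rightarrow> real ^ 'n" and M :: "real \<Rightarrow> real ^ 'n ^ 'n"
  assumes ab: "a < b" and yc: "continuous_on {a..b} y" and vc: "continuous_on {a..b} v"
   and yd: "\<And>s. s \<in> {a<..<b} \<Longrightarrow> (y has_vector_derivative (M s *v y s)) (at s)"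
   and vd: "\<And>s. s \<in> {a<..<b} \<Longrightarrow> (v has_vector_derivative v' s) (at s)"
   and mz: "\<And>s. s \<in> {a<..<b} \<Longrightarrow> metzler (M s)"
   and lt: "\<And>s i. s \<in> {a<..<b} \<Longrightarrow> (M s *v v s) $ i < v' s $ i"
   and dp: "\<delta> > 0" and y0: "\<And>i. y a $ i > - \<delta> * v a $ i"
  shows "\<forall>s\<in>{a..<b}. \<forall>i. y s $ i > - \<delta> * v s $ i"
proof (rule ccontr)
  define g where "g i s = y s $ i + \<delta> * v s $ i" for i s
  assume "\<not> ?thesis"
  then obtain t i0 where t: "t \<in> {a..<b}" and ti0: "y t $ i0 \<le> - \<delta> * v t $ i0"
    by (auto simp: not_less)
  have ti: "g i0 t \<le> 0" using ti0 by (simp add: g_def)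
  have gc: "continuous_on {a..t} (g i)" for i
    unfolding g_def
    by (intro continuous_intros continuous_on_subset[OF yc] continuous_on_subset[OF vc]) (use t in auto)
  define S where "S = (\<Union>i. {s \<in> {a..t}. g i s \<le> (\<lambda>_. 0) s})"
  have cS: "closed S" unfolding S_def
  proof (intro closed_Union)
    show "finite (range (\<lambda>i. {s \<in> {a..t}. g i s \<le> (\<lambda>_. 0) s}))" by simp
    show "\<forall>T\<in>range (\<lambda>i. {s \<in> {a..t}. g i s \<le> (\<lambda>_. 0) s}). closed T"
      using continuous_on_closed_Collect_le[OF gc continuous_on_const closed_atLeastAtMost] by blast
  qed
  have tS: "t \<in> S" using t ti by (auto simp: S_def)
  have bS: "bdd_below S" by (auto simp: S_def bdd_below_def)
  define ts where "ts = Inf S"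
  have tsS: "ts \<in> S" using closed_contains_Inf[OF _ bS cS] tS ts_def by auto
  then obtain i where tsi: "ts \<in> {a..t}" "g i ts \<le> 0" by (auto simp: S_def)
  have ga: "g j a > 0" for j using y0[of j] by (simp add: g_def)
  have tsa: "ts \<noteq> a" using tsi ga[of i] by auto
  hence ts_in: "ts \<in> {a<..<b}" using tsi t by auto
  have before: "g j s > 0" if "a \<le> s" "s < ts" for j s
  proof (rule ccontr)
    assume "\<not> g j s > 0"
    hence "s \<in> S" using that tsi unfolding S_def by (auto intro!: exI[of _ j])
    hence "ts \<le> s" unfolding ts_def using bS by (rule cInf_lower)
    thus False using that by simp
  qed
  have gder: "((g j) has_real_derivative ((M ts *v y ts) $ j + \<delta> * v' ts $ j)) (at ts)" for j
    unfolding g_def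
    by (intro derivative_intros comp_deriv yd vd ts_in DERIV_cmult)
  have geq: "g j ts \<ge> 0" for j
  proof -
    have "((g j) \<longlongrightarrow> g j ts) (at_left ts)"
      using DERIV_isCont[OF gder[of j]] by (simp add: isCont_def filterlim_at_split)
    moreover have "eventually (\<lambda>s. 0 \<le> g j s) (at_left ts)"
      using eventually_at_left_real[of a ts] ts_in
      by (auto elim!: eventually_mono intro: less_imp_le before)
    ultimately show ?thesis by (rule tendsto_lowerbound) simp
  qed
  have yj: "y ts $ j \<ge> - \<delta> * v ts $ j" for j using geq[of j] by (simp add: g_def)
  have yi: "y ts $ i = - \<delta> * v ts $ i" using geq[of i] tsi by (simp add: g_def)
  have termw: "M ts $ i $ j * (- \<delta> * v ts $ j) \<le> M ts $ i $ j * y ts $ j" for j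
  proof (cases "j = i")
    case True thus ?thesis using yi by simp
  next
    case False
    hence m0: "M ts $ i $ j \<ge> 0" using mz[OF ts_in] by (simp add: metzler_def)
    show ?thesis using mult_left_mono[OF yj[of j] m0] by simp
  qed
  have "(M ts *v y ts) $ i \<ge> (M ts *v (- \<delta> *\<^sub>R v ts)) $ i"
    unfolding matrix_vector_mult_def using sum_mono[OF termw] by simp
  also have "(M ts *v (- \<delta> *\<^sub>R v ts)) $ i = - \<delta> * (M ts *v v ts) $ i"
    by (simp add: matrix_vector_mult_def sum_distrib_left algebra_simps)
  finally have fin: "(M ts *v y ts) $ i \<ge> - \<delta> * (M ts *v v ts) $ i" .
  have "\<delta> * (M ts *v v ts) $ i < \<delta> * v' ts $ i" using lt[OF ts_in, of i] dp by simp
  hence "(M ts *v y ts) $ i + \<delta> * v' ts $ i > 0" using fin by linarith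
  from DERIV_pos_inc_left[OF gder[of i] this] obtain d where d: "d > 0"
    "\<And>h. h > 0 \<Longrightarrow> h < d \<Longrightarrow> g i (ts - h) < g i ts" by blast
  define h where "h = min (d/2) ((ts - a)/2)"
  have "h > 0" "h < d" using d ts_in by (auto simp: h_def)
  hence "g i (ts - h) < 0" using d(2) tsi by fastforce
  moreover have "g i (ts - h) > 0" using \<open>h > 0\<close> ts_in by (intro before) (auto simp: h_def min_def field_simps)
  ultimately show False by simp
qed

lemma barrier_strict2:
  fixes y v v' :: "real \<Rightarrow> real ^ 'n" and M :: "real \<Rightarrow> real ^ 'n ^ 'n"
  assumes ab: "a < b" and yc: "continuous_on {a..b} y" and vc: "continuous_on {a..b} v"
   and yd: "\<And>s. s \<in> {a<..<b} \<Longrightarrow> (y has_vector_derivative (M s *v y s)) (at s)"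
   and vd: "\<And>s. s \<in> {a<..<b} \<Longrightarrow> (v has_vector_derivative v' s) (at s)"
   and mz: "\<And>s. s \<in> {a<..<b} \<Longrightarrow> metzler (M s)"
   and lt: "\<And>s i. s \<in> {a<..<b} \<Longrightarrow> (M s *v v s) $ i < v' s $ i"
   and dp: "\<delta> > 0" and y0: "\<And>i. y a $ i > - \<delta> * v a $ i"
  shows "\<forall>s\<in>{a..b}. \<forall>i. y s $ i \<ge> - \<delta> * v s $ i"
proof (intro ballI allI)
  fix s i assume s: "s \<in> {a..b}"
  have st: "\<forall>s\<in>{a..<b}. \<forall>i. y s $ i > - \<delta> * v s $ i"
    by (rule barrier_strict[OF assms])
  show "y s $ i \<ge> - \<delta> * v s $ i"
  proof (cases "s = b")
    case False thus ?thesis using st s by (auto intro: less_imp_le)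
  next
    case True
    have hc: "continuous_on {a..b} (\<lambda>s. y s $ i + \<delta> * v s $ i)"
      by (intro continuous_intros yc vc)
    have "((\<lambda>s. y s $ i + \<delta> * v s $ i) \<longlongrightarrow> y b $ i + \<delta> * v b $ i) (at_left b)"
      using continuous_on_Icc_at_leftD[OF hc ab] .
    moreover have "eventually (\<lambda>s. 0 \<le> y s $ i + \<delta> * v s $ i) (at_left b)"
      using eventually_at_left_real[OF ab]
    proof (rule eventually_mono)
      fix x assume "x \<in> {a<..<b}"
      hence "y x $ i > - \<delta> * v x $ i" using st by auto
      thus "0 \<le> y x $ i + \<delta> * v x $ i" by simp
    qed
    ultimately have "0 \<le> y b $ i + \<delta> * v b $ i" by (rule tendsto_lowerbound) simp
    thus ?thesis using True by simp
  qed
qed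

lemma barrier:
  fixes y v v' :: "real \<Rightarrow> real ^ 'n" and M :: "real \<Rightarrow> real ^ 'n ^ 'n"
  assumes ab: "a < b" and yc: "continuous_on {a..b} y" and vc: "continuous_on {a..b} v"
   and yd: "\<And>s. s \<in> {a<..<b} \<Longrightarrow> (y has_vector_derivative (M s *v y s)) (at s)"
   and vd: "\<And>s. s \<in> {a<..<b} \<Longrightarrow> (v has_vector_derivative v' s) (at s)"
   and mz: "\<And>s. s \<in> {a<..<b} \<Longrightarrow> metzler (M s)"
   and lt: "\<And>s i. s \<in> {a<..<b} \<Longrightarrow> (M s *v v s) $ i < v' s $ i"
   and vp: "\<And>i. v a $ i > 0"
   and dp: "\<delta> \<ge> 0" and y0: "\<And>i. y a $ i \<ge> - \<delta> * v a $ i"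
  shows "\<forall>s\<in>{a..b}. \<forall>i. y s $ i \<ge> - \<delta> * v s $ i"
proof (intro ballI allI)
  fix s i assume s: "s \<in> {a..b}"
  have e: "y s $ i \<ge> - e * v s $ i" if "e > \<delta>" for e
  proof -
    have "e > 0" using that dp by simp
    moreover have "y a $ j > - e * v a $ j" for j
    proof -
      have "- e * v a $ j < - \<delta> * v a $ j" using vp[of j] that by simp
      thus ?thesis using y0[of j] by linarith
    qed
    ultimately show ?thesis
      using barrier_strict2[OF ab yc vc yd vd mz lt, of e] s by blast
  qed
  have "((\<lambda>e. - e * v s $ i) \<longlongrightarrow> - \<delta> * v s $ i) (at_right \<delta>)"
    by (intro tendsto_intros)
  moreover have "eventually (\<lambda>e. - e * v s $ i \<le> y s $ i) (at_right \<delta>)"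
    using eventually_at_right_less[of \<delta>] by (rule eventually_mono) (rule e)
  ultimately show "y s $ i \<ge> - \<delta> * v s $ i" by (rule tendsto_upperbound) simp
qed


lemma vderiv_cont_on:
  assumes "\<And>s. s \<in> S \<Longrightarrow> (f has_vector_derivative f' s) (at s within S)"
  shows "continuous_on S f"
  using assms unfolding has_vector_derivative_def by (rule has_derivative_continuous_on)

lemma bl_mv: "bounded_linear (\<lambda>A::real^'n^'m. A *v w)"
proof -
  have "linear (\<lambda>A::real^'n^'m. A *v w)"
  proof (rule linearI)
    show "(b1 + b2) *v w = b1 *v w + b2 *v w" for b1 b2 :: "real^'n^'m"
      by (rule matrix_vector_mult_add_rdistrib)
    show "(r *\<^sub>R b) *v w = r *\<^sub>R (b *v w)" for r and b :: "real^'n^'m"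
      by (simp add: vec_eq_iff matrix_vector_mult_def sum_distrib_left algebra_simps)
  qed
  thus ?thesis by (simp add: linear_conv_bounded_linear)
qed

lemma mv_deriv:
  fixes X :: "real \<Rightarrow> real^'n^'m"
  assumes "(X has_vector_derivative X') F"
  shows "((\<lambda>t. X t *v w) has_vector_derivative X' *v w) F"
  using bounded_linear.has_vector_derivative[OF bl_mv assms] .

lemma diag_entry: "diag_mat X \<Longrightarrow> X $ i $ j = (if i = j then X $ i $ i else 0)"
  by (auto simp: diag_mat_def)

lemma diag_mult_right: "diag_mat D \<Longrightarrow> (N ** D) $ i $ j = N $ i $ j * D $ j $ j"
proof -
  assume d: "diag_mat D"
  have "(N ** D) $ i $ j = (\<Sum>k\<in>UNIV. if k = j then N $ i $ j * D $ j $ j else 0)"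
    unfolding matrix_matrix_mult_def vec_lambda_beta
    by (rule sum.cong) (use d in \<open>auto simp: diag_mat_def\<close>)
  also have "\<dots> = N $ i $ j * D $ j $ j" by simp
  finally show ?thesis .
qed

lemma diag_ones: "diag_mat X \<Longrightarrow> (X *v ones) $ i = X $ i $ i"
proof -
  assume d: "diag_mat X"
  have "(X *v ones) $ i = (\<Sum>k\<in>UNIV. (if i = k then X $ i $ i else 0))"
    unfolding matrix_vector_mult_def ones_def vec_lambda_beta
    by (rule sum.cong) (use d in \<open>auto simp: diag_mat_def\<close>)
  thus ?thesis by simp
qed

lemma diag_inv_nonzero:
  assumes "diag_mat X" "invertible X"
  shows "X $ i $ i \<noteq> 0"
proof
  assume z: "X $ i $ i = 0"
  obtain Y where "X ** Y = mat 1" using assms(2) unfolding invertible_def by blast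
  hence "(X ** Y) $ i $ i = 1" by (simp add: mat_def)
  moreover have "(X ** Y) $ i $ i = 0"
    unfolding matrix_matrix_mult_def vec_lambda_beta
    by (rule sum.neutral) (metis assms(1) z diag_mat_def mult_zero_left)
  ultimately show False by simp
qed

lemma diag_matrix_inv:
  fixes X :: "real^'n^'n"
  assumes d: "diag_mat X" and nz: "\<And>i. X $ i $ i \<noteq> 0"
  shows "matrix_inv X = (\<chi> i j. if i = j then 1 / X $ i $ i else 0)" (is "_ = ?D")
proof -
  have dD: "diag_mat ?D" by (simp add: diag_mat_def)
  have XD: "X ** ?D = mat 1"
    using d nz by (auto simp: vec_eq_iff diag_mult_right[OF dD] mat_def diag_mat_def)
  have DX: "?D ** X = mat 1"
    by (simp add: vec_eq_iff diag_mult_right[OF d] mat_def nz)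
  have P: "X ** ?D = mat 1 \<and> ?D ** X = mat 1" using XD DX by simp
  have uniq: "Y = ?D" if "X ** Y = mat 1 \<and> Y ** X = mat 1" for Y
  proof -
    have "Y = Y ** (X ** ?D)" using XD by simp
    also have "\<dots> = (Y ** X) ** ?D" by (simp add: matrix_mul_assoc)
    also have "\<dots> = ?D" using that by simp
    finally show ?thesis .
  qed
  show ?thesis unfolding matrix_inv_def using someI[of "\<lambda>Y. X ** Y = mat 1 \<and> Y ** X = mat 1", OF P] uniq
    by blast
qed

lemma nonneg_mv_abs:
  fixes G :: "real^'n^'m"
  assumes "nonneg_mat G" "\<And>j. \<bar>x $ j\<bar> \<le> w $ j"
  shows "\<bar>(G *v x) $ i\<bar> \<le> (G *v w) $ i"
proof -
  have "\<bar>(G *v x) $ i\<bar> \<le> (\<Sum>j\<in>UNIV. \<bar>G $ i $ j * x $ j\<bar>)"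
    unfolding matrix_vector_mult_def by (simp add: sum_abs)
  also have "\<dots> \<le> (\<Sum>j\<in>UNIV. G $ i $ j * w $ j)"
  proof (rule sum_mono)
    fix j
    have "G $ i $ j \<ge> 0" using assms(1) by (simp add: nonneg_mat_def)
    thus "\<bar>G $ i $ j * x $ j\<bar> \<le> G $ i $ j * w $ j"
      by (simp add: abs_mult assms(2) mult_left_mono)
  qed
  finally show ?thesis by (simp add: matrix_vector_mult_def)
qed

lemma nonneg_mv_mono:
  fixes G :: "real^'n^'m"
  assumes "nonneg_mat G" "\<And>j. x $ j \<le> w $ j"
  shows "(G *v x) $ i \<le> (G *v w) $ i"
  unfolding matrix_vector_mult_def using assms
  by (simp add: sum_mono mult_left_mono nonneg_mat_def)

lemma find_k:
  fixes t T :: real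
  assumes "t > 0" "T > 0"
  shows "\<exists>k::nat. real k * T < t \<and> t \<le> real (Suc k) * T"
proof -
  define k where "k = nat (\<lceil>t / T\<rceil> - 1)"
  have c: "\<lceil>t / T\<rceil> \<ge> 1" using assms by (simp add: one_le_ceiling)
  have rk: "real k = real_of_int \<lceil>t / T\<rceil> - 1" using c by (simp add: k_def)
  have "real k < t / T" using rk ceiling_less_cancel by linarith
  moreover have "t / T \<le> real (Suc k)" using rk le_of_int_ceiling[of "t/T"] by simp
  ultimately show ?thesis using assms by (intro exI[of _ k]) (simp add: field_simps)
qed


lemma interval_lower:
  fixes x v v' :: "real \<Rightarrow> real^'n" and M :: "real \<Rightarrow> real^'n^'n"
  assumes T: "T > 0" and vc: "continuous_on {0..T} v"
   and vd: "\<And>s. s \<in> {0<..<T} \<Longrightarrow> (v has_vector_derivative v' s) (at s)"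
   and mz: "\<And>s. s \<in> {0<..<T} \<Longrightarrow> metzler (M s)"
   and lt: "\<And>s i. s \<in> {0<..<T} \<Longrightarrow> (M s *v v s) $ i < v' s $ i"
   and vp: "\<And>i. v 0 $ i > 0"
   and xc: "continuous_on {a<..a+T} x"
   and xd: "\<And>s. s \<in> {a<..<a+T} \<Longrightarrow> (x has_vector_derivative (M (s-a) *v x s)) (at s)"
   and xl: "(x \<longlongrightarrow> L) (at_right a)"
   and dp: "\<delta> \<ge> 0" and L0: "\<And>i. L $ i \<ge> - \<delta> * v 0 $ i"
  shows "\<forall>s\<in>{a<..a+T}. \<forall>i. x s $ i \<ge> - \<delta> * v (s - a) $ i"
proof -
  define z where "z s = (if s = a then L else x s)" for s
  have ab: "a < a + T" using T by simp
  have zd: "(z has_vector_derivative (M (s-a) *v z s)) (at s)" if s: "s \<in> {a<..<a+T}" for s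
  proof -
    have "z s = x s" using s by (simp add: z_def)
    moreover have "(z has_vector_derivative (M (s-a) *v x s)) (at s)"
      by (rule has_vector_derivative_transform_within_open[OF xd[OF s] open_greaterThanLessThan s])
         (simp add: z_def)
    ultimately show ?thesis by simp
  qed
  have zc: "continuous_on {a..a+T} z"
  proof (rule continuous_on_IccI)
    have "eventually (\<lambda>s. x s = z s) (at_right a)"
      using eventually_at_right_less[of a] by (rule eventually_mono) (simp add: z_def)
    thus "(z \<longlongrightarrow> z a) (at_right a)" using xl tendsto_cong by (fastforce simp: z_def)
  next
    have "continuous_on {a + T/2..a+T} x" by (rule continuous_on_subset[OF xc]) (use T in auto)
    hence "(x \<longlongrightarrow> x (a+T)) (at_left (a+T))" by (rule continuous_on_Icc_at_leftD) (use T in auto)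
    moreover have "eventually (\<lambda>s. x s = z s) (at_left (a+T))"
      using eventually_at_left_real[OF ab] by (rule eventually_mono) (simp add: z_def)
    ultimately show "(z \<longlongrightarrow> z (a+T)) (at_left (a+T))" using tendsto_cong T by (fastforce simp: z_def)
  next
    fix s assume "a < s" "s < a + T"
    hence "(z has_vector_derivative (M (s-a) *v z s)) (at s)" by (intro zd) auto
    hence "isCont z s" by (rule has_vector_derivative_continuous)
    thus "(z \<longlongrightarrow> z s) (at s)" by (simp add: isCont_def)
  qed (use T in simp)
  have v1c: "continuous_on {a..a+T} (\<lambda>s. v (s - a))"
    by (rule continuous_on_compose2[OF vc]) (auto intro!: continuous_intros)
  have v1d: "((\<lambda>s. v (s - a)) has_vector_derivative v' (s - a)) (at s)" if s: "s \<in> {a<..<a+T}" for s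
  proof -
    have "((\<lambda>s. s - a) has_vector_derivative 1) (at s)" by (auto intro!: derivative_eq_intros)
    from vector_diff_chain_at[OF this vd] s show ?thesis by (simp add: o_def)
  qed
  have res: "\<forall>s\<in>{a..a+T}. \<forall>i. z s $ i \<ge> - \<delta> * v (s - a) $ i"
  proof (rule barrier[OF ab zc v1c zd v1d])
    show "metzler (M (s - a))" if "s \<in> {a<..<a+T}" for s using that by (intro mz) auto
    show "(M (s - a) *v v (s - a)) $ i < v' (s - a) $ i" if "s \<in> {a<..<a+T}" for s i
      using that by (intro lt) auto
  qed (use vp dp L0 in \<open>auto simp: z_def\<close>)
  show ?thesis
  proof (intro ballI allI)
    fix s i assume s: "s \<in> {a<..a+T}"
    thus "x s $ i \<ge> - \<delta> * v (s - a) $ i" using res[rule_format, of s i] by (auto simp: z_def)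
  qed
qed


lemma mv_neg: "A *v (- x) = - (A *v (x::real^'n))"
  by (simp add: vec_eq_iff matrix_vector_mult_def sum_negf)

lemma mv_neg2: "(- A) *v x = - (A *v (x::real^'n))"
  by (simp add: vec_eq_iff matrix_vector_mult_def sum_negf)

lemma interval_abs:
  fixes x v v' :: "real \<Rightarrow> real^'n" and M :: "real \<Rightarrow> real^'n^'n"
  assumes T: "T > 0" and vc: "continuous_on {0..T} v"
   and vd: "\<And>s. s \<in> {0<..<T} \<Longrightarrow> (v has_vector_derivative v' s) (at s)"
   and mz: "\<And>s. s \<in> {0<..<T} \<Longrightarrow> metzler (M s)"
   and lt: "\<And>s i. s \<in> {0<..<T} \<Longrightarrow> (M s *v v s) $ i < v' s $ i"
   and vp: "\<And>i. v 0 $ i > 0"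
   and xc: "continuous_on {a<..a+T} x"
   and xd: "\<And>s. s \<in> {a<..<a+T} \<Longrightarrow> (x has_vector_derivative (M (s-a) *v x s)) (at s)"
   and xl: "(x \<longlongrightarrow> L) (at_right a)"
   and dp: "c \<ge> 0" and L0: "\<And>i. \<bar>L $ i\<bar> \<le> c * v 0 $ i"
  shows "\<forall>s\<in>{a<..a+T}. \<forall>i. \<bar>x s $ i\<bar> \<le> c * v (s - a) $ i"
proof -
  have lo: "\<forall>s\<in>{a<..a+T}. \<forall>i. x s $ i \<ge> - c * v (s - a) $ i"
  proof (rule interval_lower[OF T vc vd mz lt vp xc xd xl dp])
    fix i show "- c * v 0 $ i \<le> L $ i" using L0[of i] by linarith
  qed
  have xd': "((\<lambda>s. - x s) has_vector_derivative (M (s-a) *v (- x s))) (at s)" if "s \<in> {a<..<a+T}" for s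
    using has_vector_derivative_minus[OF xd[OF that]] by (simp add: mv_neg)
  have hi: "\<forall>s\<in>{a<..a+T}. \<forall>i. (- x s) $ i \<ge> - c * v (s - a) $ i"
  proof (rule interval_lower[OF T vc vd mz lt vp continuous_on_minus[OF xc] xd' tendsto_minus[OF xl] dp])
    fix i show "- c * v 0 $ i \<le> (- L) $ i" using L0[of i] by simp
  qed
  show ?thesis
  proof (intro ballI allI)
    fix s i assume "s \<in> {a<..a+T}"
    hence "- (c * v (s - a) $ i) \<le> x s $ i" "x s $ i \<le> c * v (s - a) $ i"
      using lo hi by auto
    thus "\<bar>x s $ i\<bar> \<le> c * v (s - a) $ i" by linarith
  qed
qed

lemma closed_loop_bounds:
  fixes x v v' :: "real \<Rightarrow> real^'n" and M :: "real \<Rightarrow> real^'n^'n" and G :: "real^'n^'n"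
  assumes T: "T > 0" and vc: "continuous_on {0..T} v"
   and vd: "\<And>s. s \<in> {0<..<T} \<Longrightarrow> (v has_vector_derivative v' s) (at s)"
   and mz: "\<And>s. s \<in> {0<..<T} \<Longrightarrow> metzler (M s)"
   and lt: "\<And>s i. s \<in> {0<..<T} \<Longrightarrow> (M s *v v s) $ i < v' s $ i"
   and vp: "\<And>i. v 0 $ i > 0"
   and Gnn: "nonneg_mat G" and GvT: "\<And>i. (G *v v T) $ i \<le> \<rho> * v 0 $ i" and rp: "\<rho> \<ge> 0"
   and xc: "\<And>k::nat. continuous_on {real k * T<..real k * T+T} x"
   and xd: "\<And>k::nat. \<And>s. s \<in> {real k * T<..<real k * T+T} \<Longrightarrow>
              (x has_vector_derivative (M (s - real k * T) *v x s)) (at s)"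
   and xl: "\<And>k::nat. (x \<longlongrightarrow> (if k = 0 then x 0 else G *v x (real k * T))) (at_right (real k * T))"
   and cp: "c \<ge> 0" and x0: "\<And>i. \<bar>x 0 $ i\<bar> \<le> c * v 0 $ i"
  shows "\<forall>s\<in>{real k * T<..real k * T+T}. \<forall>i. \<bar>x s $ i\<bar> \<le> \<rho>^k * c * v (s - real k * T) $ i"
proof -
  define L where "L k = (if k = 0 then x 0 else G *v x (real k * T))" for k :: nat
  have Lb: "\<bar>L k $ i\<bar> \<le> \<rho>^k * c * v 0 $ i" for k i
  proof (induction k arbitrary: i)
    case 0 thus ?case using x0 by (simp add: L_def)
  next
    case (Suc k)
    have iv: "\<forall>s\<in>{real k * T<..real k * T+T}. \<forall>i. \<bar>x s $ i\<bar> \<le> (\<rho>^k * c) * v (s - real k * T) $ i"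
      by (rule interval_abs[OF T vc vd mz lt vp xc xd xl[unfolded L_def[symmetric]]])
         (use Suc.IH rp cp in \<open>auto\<close>)
    have e: "real (Suc k) * T = real k * T + T" by (simp add: algebra_simps)
    have xb: "\<bar>x (real (Suc k) * T) $ j\<bar> \<le> ((\<rho>^k * c) *\<^sub>R v T) $ j" for j
      using iv[rule_format, of "real k * T + T" j] T e by simp
    have "\<bar>L (Suc k) $ i\<bar> = \<bar>(G *v x (real (Suc k) * T)) $ i\<bar>" by (simp add: L_def)
    also have "\<dots> \<le> (G *v ((\<rho>^k * c) *\<^sub>R v T)) $ i" by (rule nonneg_mv_abs[OF Gnn xb])
    also have "\<dots> = (\<rho>^k * c) * (G *v v T) $ i" by (simp add: matrix_vector_mult_scaleR)
    also have "\<dots> \<le> (\<rho>^k * c) * (\<rho> * v 0 $ i)"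
      by (rule mult_left_mono[OF GvT]) (use rp cp in simp)
    finally show ?case by (simp add: algebra_simps)
  qed
  show ?thesis
    by (rule interval_abs[OF T vc vd mz lt vp xc xd xl[unfolded L_def[symmetric]]])
       (use Lb rp cp in auto)
qed

lemma closed_loop_pos:
  fixes x v v' :: "real \<Rightarrow> real^'n" and M :: "real \<Rightarrow> real^'n^'n" and G :: "real^'n^'n"
  assumes T: "T > 0" and vc: "continuous_on {0..T} v"
   and vd: "\<And>s. s \<in> {0<..<T} \<Longrightarrow> (v has_vector_derivative v' s) (at s)"
   and mz: "\<And>s. s \<in> {0<..<T} \<Longrightarrow> metzler (M s)"
   and lt: "\<And>s i. s \<in> {0<..<T} \<Longrightarrow> (M s *v v s) $ i < v' s $ i"
   and vp: "\<And>i. v 0 $ i > 0"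
   and Gnn: "nonneg_mat G"
   and xc: "\<And>k::nat. continuous_on {real k * T<..real k * T+T} x"
   and xd: "\<And>k::nat. \<And>s. s \<in> {real k * T<..<real k * T+T} \<Longrightarrow>
              (x has_vector_derivative (M (s - real k * T) *v x s)) (at s)"
   and xl: "\<And>k::nat. (x \<longlongrightarrow> (if k = 0 then x 0 else G *v x (real k * T))) (at_right (real k * T))"
   and x0: "\<And>i. x 0 $ i \<ge> 0"
  shows "\<forall>s\<in>{real k * T<..real k * T+T}. \<forall>i. x s $ i \<ge> 0"
proof -
  define L where "L k = (if k = 0 then x 0 else G *v x (real k * T))" for k :: nat
  have Lb: "L k $ i \<ge> 0" for k i
  proof (induction k arbitrary: i)
    case 0 thus ?case using x0 by (simp add: L_def)
  next
    case (Suc k)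
    have iv: "\<forall>s\<in>{real k * T<..real k * T+T}. \<forall>i. x s $ i \<ge> - 0 * v (s - real k * T) $ i"
      by (rule interval_lower[OF T vc vd mz lt vp xc xd xl[unfolded L_def[symmetric]]])
         (use Suc.IH in \<open>auto\<close>)
    have e: "real (Suc k) * T = real k * T + T" by (simp add: algebra_simps)
    have xb: "(0::real^'n) $ j \<le> x (real (Suc k) * T) $ j" for j
      using iv[rule_format, of "real k * T + T" j] T e by simp
    have "(G *v 0) $ i \<le> (G *v x (real (Suc k) * T)) $ i" by (rule nonneg_mv_mono[OF Gnn xb])
    thus ?case by (simp add: L_def)
  qed
  have "\<forall>s\<in>{real k * T<..real k * T+T}. \<forall>i. x s $ i \<ge> - 0 * v (s - real k * T) $ i"
    by (rule interval_lower[OF T vc vd mz lt vp xc xd xl[unfolded L_def[symmetric]]])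
       (use Lb in auto)
  thus ?thesis by simp
qed


lemma matrix_add_rdistrib': "((A::real^'n^'m) + B) ** C = A ** C + B ** C"
  by (simp add: vec_eq_iff matrix_matrix_mult_def sum.distrib distrib_right)

lemma inv_props:
  fixes A :: "real^'n^'n"
  assumes "invertible A"
  shows "A ** matrix_inv A = mat 1" "matrix_inv A ** A = mat 1"
proof -
  have "\<exists>A'. A ** A' = mat 1 \<and> A' ** A = mat 1" using assms by (simp add: invertible_def)
  from someI_ex[OF this] show "A ** matrix_inv A = mat 1" "matrix_inv A ** A = mat 1"
    by (simp_all add: matrix_inv_def)
qed

lemma mv_comb: "(A + B ** K) *v y = A *v y + B *v (K *v (y::real^'n))"
  by (simp add: matrix_vector_mult_add_rdistrib matrix_vector_mul_assoc)


lemma scaleR_mv: "(c *\<^sub>R A) *v (x::real^'n) = c *\<^sub>R (A *v x)"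
  by (simp add: vec_eq_iff matrix_vector_mult_def sum_distrib_left algebra_simps)

theorem theorem7:
  fixes A J :: "real ^ 'n ^ 'n"
    and Bc :: "real ^ 'mc ^ 'n"
    and Bd :: "real ^ 'md ^ 'n"
    and T :: real
    and X X' :: "real \<Rightarrow> real ^ 'n ^ 'n"
    and U :: "real \<Rightarrow> real ^ 'n ^ 'mc"
    and Ud :: "real ^ 'n ^ 'md"
    and \<epsilon> \<alpha> :: real
  assumes T_pos: "T > 0"
    and X_deriv: "\<And>\<tau>. \<tau> \<in> {0..T} \<Longrightarrow> (X has_vector_derivative X' \<tau>) (at \<tau> within {0..T})"
    and X'_cont: "continuous_on {0..T} X'"
    and X_diag: "\<And>\<tau>. \<tau> \<in> {0..T} \<Longrightarrow> diag_mat (X \<tau>)"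
    and X_nonsing: "\<And>\<tau>. \<tau> \<in> {0..T} \<Longrightarrow> invertible (X \<tau>)"
    and X0_pos: "pos_diag_mat (X 0)"
    and U_cont: "continuous_on {0..T} U"
    and eps_pos: "\<epsilon> > 0"
    and alpha_pos: "\<alpha> > 0"
    and C1: "\<And>\<tau>. \<tau> \<in> {0..T} \<Longrightarrow> nonneg_mat (A ** X \<tau> + Bc ** U \<tau> + \<alpha> *\<^sub>R mat 1)"
    and C2: "nonneg_mat (J ** X T + Bd ** Ud)"
    and C3: "\<And>\<tau> i. \<tau> \<in> {0..T} \<Longrightarrow> ((- X' \<tau> + A ** X \<tau> + Bc ** U \<tau>) *v ones) $ i < 0"
    and C4: "\<And>i. ((J ** X T + Bd ** Ud - X 0 + \<epsilon> *\<^sub>R mat 1) *v ones) $ i \<le> 0"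
  defines "Kc \<equiv> (\<lambda>\<tau>. U \<tau> ** matrix_inv (X \<tau>))"
    and "Kd \<equiv> Ud ** matrix_inv (X T)"
  shows "(\<forall>\<tau>\<in>{0..T}. metzler (A + Bc ** Kc \<tau>))
       \<and> nonneg_mat (J + Bd ** Kd)
       \<and> (\<forall>\<Psi> :: real \<Rightarrow> real ^ 'n ^ 'n.
            \<Psi> 0 = mat 1 \<and>
            (\<forall>s\<in>{0..T}. (\<Psi> has_vector_derivative ((A + Bc ** Kc s) ** \<Psi> s)) (at s within {0..T}))
            \<longrightarrow> (\<forall>i. ((((J + Bd ** Kd) ** \<Psi> T - mat 1) ** X 0) *v ones) $ i < 0))
       \<and> closed_loop_positive A Bc J Bd Kc Kd T
       \<and> closed_loop_GAS A Bc J Bd Kc Kd T"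
proof -
  define D where "D \<tau> = matrix_inv (X \<tau>)" for \<tau>
  define N where "N \<tau> = A ** X \<tau> + Bc ** U \<tau>" for \<tau>
  define M where "M \<tau> = A + Bc ** Kc \<tau>" for \<tau>
  define v where "v \<tau> = X \<tau> *v ones" for \<tau>
  define v' where "v' \<tau> = X' \<tau> *v ones" for \<tau>
  define P where "P = J ** X T + Bd ** Ud"
  define G where "G = J + Bd ** Kd"
  have T0: "T \<in> {0..T}" "0 \<in> {0..T}" using T_pos by auto
  have Xc: "continuous_on {0..T} X" by (rule vderiv_cont_on[OF X_deriv])
  have Xnz: "X \<tau> $ i $ i \<noteq> 0" if "\<tau> \<in> {0..T}" for \<tau> i
    using diag_inv_nonzero[OF X_diag[OF that] X_nonsing[OF that]] .
  have Xpos: "X \<tau> $ i $ i > 0" if t: "\<tau> \<in> {0..T}" for \<tau> i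
  proof (rule ccontr)
    assume "\<not> X \<tau> $ i $ i > 0"
    hence neg: "X \<tau> $ i $ i \<le> 0" by simp
    have c: "continuous_on {0..\<tau>} (\<lambda>t. X t $ i $ i)"
      by (intro continuous_intros continuous_on_subset[OF Xc]) (use t in auto)
    have p0: "0 \<le> X 0 $ i $ i" using X0_pos by (simp add: pos_diag_mat_def less_imp_le)
    obtain s where "0 \<le> s" "s \<le> \<tau>" "X s $ i $ i = 0"
      using IVT2'[of "\<lambda>t. X t $ i $ i" \<tau> 0 0, OF neg p0 _ c] t by auto
    thus False using Xnz[of s i] t by auto
  qed
  have Dd: "D \<tau> = (\<chi> i j. if i = j then 1 / X \<tau> $ i $ i else 0)" if "\<tau> \<in> {0..T}" for \<tau>
    unfolding D_def by (rule diag_matrix_inv[OF X_diag[OF that] Xnz[OF that]])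
  have Ddiag: "diag_mat (D \<tau>)" if "\<tau> \<in> {0..T}" for \<tau> using Dd[OF that] by (simp add: diag_mat_def)
  have Dent: "D \<tau> $ j $ j = 1 / X \<tau> $ j $ j" if "\<tau> \<in> {0..T}" for \<tau> j using Dd[OF that] by simp
  have XDI: "X \<tau> ** D \<tau> = mat 1" "D \<tau> ** X \<tau> = mat 1" if "\<tau> \<in> {0..T}" for \<tau>
    using inv_props[OF X_nonsing[OF that]] by (simp_all add: D_def)
  have MN: "M \<tau> = N \<tau> ** D \<tau>" if t: "\<tau> \<in> {0..T}" for \<tau>
  proof -
    have "M \<tau> = A ** (X \<tau> ** D \<tau>) + Bc ** (U \<tau> ** D \<tau>)"
      using XDI[OF t] by (simp add: M_def Kc_def D_def)
    also have "\<dots> = N \<tau> ** D \<tau>" by (simp add: N_def matrix_mul_assoc matrix_add_rdistrib')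
    finally show ?thesis .
  qed
  have Ment: "M \<tau> $ i $ j = N \<tau> $ i $ j / X \<tau> $ j $ j" if t: "\<tau> \<in> {0..T}" for \<tau> i j
    using MN[OF t] diag_mult_right[OF Ddiag[OF t]] Dent[OF t] by simp
  have Noff: "N \<tau> $ i $ j \<ge> 0" if t: "\<tau> \<in> {0..T}" and ij: "i \<noteq> j" for \<tau> i j
  proof -
    have "(N \<tau> + \<alpha> *\<^sub>R mat 1) $ i $ j \<ge> 0" using C1[OF t] by (simp add: nonneg_mat_def N_def)
    thus ?thesis using ij by (simp add: mat_def)
  qed
  have metz: "metzler (M \<tau>)" if t: "\<tau> \<in> {0..T}" for \<tau>
    unfolding metzler_def using Ment[OF t] Noff[OF t] Xpos[OF t] by (auto intro!: divide_nonneg_pos)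
  have Mv: "M \<tau> *v v \<tau> = N \<tau> *v ones" if t: "\<tau> \<in> {0..T}" for \<tau>
  proof -
    have "M \<tau> ** X \<tau> = N \<tau>" using MN[OF t] XDI[OF t] by (simp add: matrix_mul_assoc[symmetric])
    thus ?thesis by (simp add: v_def matrix_vector_mul_assoc)
  qed
  have lt: "(M \<tau> *v v \<tau>) $ i < v' \<tau> $ i" if t: "\<tau> \<in> {0..T}" for \<tau> i
  proof -
    have "((- X' \<tau> + A ** X \<tau> + Bc ** U \<tau>) *v ones) $ i = - (X' \<tau> *v ones) $ i + (N \<tau> *v ones) $ i"
      by (simp add: N_def matrix_vector_mult_add_rdistrib matrix_vector_mult_diff_rdistrib mv_neg2)
    thus ?thesis using C3[OF t, of i] Mv[OF t] by (simp add: v'_def)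
  qed
  have vd: "(v has_vector_derivative v' \<tau>) (at \<tau> within {0..T})" if "\<tau> \<in> {0..T}" for \<tau>
    unfolding v_def v'_def by (rule mv_deriv[OF X_deriv[OF that]])
  have vdi: "(v has_vector_derivative v' \<tau>) (at \<tau>)" if "\<tau> \<in> {0<..<T}" for \<tau>
    using vd[of \<tau>] that by (simp add: at_within_Icc_at)
  have vc: "continuous_on {0..T} v" by (rule vderiv_cont_on[OF vd])
  have vent: "v \<tau> $ i = X \<tau> $ i $ i" if "\<tau> \<in> {0..T}" for \<tau> i
    unfolding v_def by (rule diag_ones[OF X_diag[OF that]])
  have vp: "v 0 $ i > 0" for i using vent[OF T0(2)] Xpos[OF T0(2)] by simp
  have GP: "G = P ** D T"
  proof -
    have "G = J ** (X T ** D T) + Bd ** (Ud ** D T)" using XDI[OF T0(1)] by (simp add: G_def Kd_def D_def)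
    also have "\<dots> = P ** D T" by (simp add: P_def matrix_mul_assoc matrix_add_rdistrib')
    finally show ?thesis .
  qed
  have Gent: "G $ i $ j = P $ i $ j / X T $ j $ j" for i j
    using GP diag_mult_right[OF Ddiag[OF T0(1)]] Dent[OF T0(1)] by simp
  have Gnn: "nonneg_mat G"
    unfolding nonneg_mat_def using Gent C2 Xpos[OF T0(1)] by (auto simp: nonneg_mat_def P_def intro!: divide_nonneg_pos)
  have GvT: "G *v v T = P *v ones"
  proof -
    have "G ** X T = P" using GP XDI[OF T0(1)] by (simp add: matrix_mul_assoc[symmetric])
    thus ?thesis by (simp add: v_def matrix_vector_mul_assoc)
  qed
  have C4': "(P *v ones) $ i \<le> v 0 $ i - \<epsilon>" for i
  proof -
    have "((J ** X T + Bd ** Ud - X 0 + \<epsilon> *\<^sub>R mat 1) *v ones) $ i = (P *v ones) $ i - v 0 $ i + \<epsilon>"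
      by (simp add: P_def v_def matrix_vector_mult_add_rdistrib matrix_vector_mult_diff_rdistrib
                    scaleR_mv ones_def)
    thus ?thesis using C4[of i] by simp
  qed
  have metz': "metzler (M s)" if "s \<in> {0<..<T}" for s using that by (intro metz) auto
  have lt': "(M s *v v s) $ i < v' s $ i" if "s \<in> {0<..<T}" for s i using that by (intro lt) auto
  have part1: "\<forall>\<tau>\<in>{0..T}. metzler (A + Bc ** Kc \<tau>)" using metz by (simp add: M_def)
  have part2: "nonneg_mat (J + Bd ** Kd)" using Gnn by (simp add: G_def)
  have part3: "\<forall>\<Psi> :: real \<Rightarrow> real ^ 'n ^ 'n.
            \<Psi> 0 = mat 1 \<and>
            (\<forall>s\<in>{0..T}. (\<Psi> has_vector_derivative ((A + Bc ** Kc s) ** \<Psi> s)) (at s within {0..T}))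
            \<longrightarrow> (\<forall>i. ((((J + Bd ** Kd) ** \<Psi> T - mat 1) ** X 0) *v ones) $ i < 0)"
  proof (intro allI impI)
    fix \<Psi> :: "real \<Rightarrow> real ^ 'n ^ 'n" and i
    assume H: "\<Psi> 0 = mat 1 \<and>
            (\<forall>s\<in>{0..T}. (\<Psi> has_vector_derivative ((A + Bc ** Kc s) ** \<Psi> s)) (at s within {0..T}))"
    define y where "y \<tau> = - (\<Psi> \<tau> *v v 0)" for \<tau>
    have yd: "(y has_vector_derivative (M s *v y s)) (at s within {0..T})" if "s \<in> {0..T}" for s
    proof -
      have "((\<lambda>t. \<Psi> t *v v 0) has_vector_derivative ((M s ** \<Psi> s) *v v 0)) (at s within {0..T})"
        using H that by (intro mv_deriv) (simp add: M_def)
      from has_vector_derivative_minus[OF this] show ?thesis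
        unfolding y_def[abs_def] by (simp add: mv_neg matrix_vector_mul_assoc)
    qed
    have yc: "continuous_on {0..T} y" by (rule vderiv_cont_on[OF yd])
    have ydi: "(y has_vector_derivative (M s *v y s)) (at s)" if "s \<in> {0<..<T}" for s
      using yd[of s] that by (simp add: at_within_Icc_at)
    have "\<forall>s\<in>{0..T}. \<forall>i. y s $ i \<ge> - 1 * v s $ i"
      by (rule barrier[OF T_pos yc vc ydi vdi metz' lt' vp]) (use H in \<open>simp_all add: y_def\<close>)
    hence yT: "(\<Psi> T *v v 0) $ j \<le> v T $ j" for j using T0(1) by (force simp: y_def)
    have "(G *v (\<Psi> T *v v 0)) $ i \<le> (G *v v T) $ i" by (rule nonneg_mv_mono[OF Gnn yT])
    also have "\<dots> \<le> v 0 $ i - \<epsilon>" using GvT C4'[of i] by simp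
    finally have "(G *v (\<Psi> T *v v 0)) $ i - v 0 $ i < 0" using eps_pos by simp
    moreover have "(((G ** \<Psi> T - mat 1) ** X 0) *v ones) = G *v (\<Psi> T *v v 0) - v 0"
      by (simp add: v_def matrix_vector_mul_assoc[symmetric] matrix_vector_mult_diff_rdistrib)
    ultimately show "((((J + Bd ** Kd) ** \<Psi> T - mat 1) ** X 0) *v ones) $ i < 0"
      by (simp add: G_def)
  qed
  have e: "real (Suc k) * T = real k * T + T" for k by (simp add: algebra_simps)
  have solp: "(\<forall>k::nat. continuous_on {real k * T<..real k * T+T} x) \<and>
      (\<forall>k::nat. \<forall>s. s \<in> {real k * T<..<real k * T+T} \<longrightarrow>
              (x has_vector_derivative (M (s - real k * T) *v x s)) (at s)) \<and>
      (\<forall>k::nat. (x \<longlongrightarrow> (if k = 0 then x 0 else G *v x (real k * T))) (at_right (real k * T)))"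
    if sol: "closed_loop_sol A Bc J Bd Kc Kd T x" for x
  proof (intro conjI allI impI)
    fix k :: nat
    have S: "continuous_on {real k * T<..real (Suc k) * T} x \<and>
        (\<forall>s. real k * T < s \<and> s < real (Suc k) * T \<longrightarrow>
              (x has_vector_derivative (A *v x s + Bc *v (Kc (s - real k * T) *v x s))) (at s)) \<and>
        (x \<longlongrightarrow> (if k = 0 then x 0
                    else J *v x (real k * T) + Bd *v (Kd *v x (real k * T))))
          (at_right (real k * T))"
      using sol unfolding closed_loop_sol_def by blast
    show "continuous_on {real k * T<..real k * T+T} x" using S unfolding e by blast
    have "J *v x (real k * T) + Bd *v (Kd *v x (real k * T)) = G *v x (real k * T)"
      by (simp add: G_def mv_comb)
    thus "(x \<longlongrightarrow> (if k = 0 then x 0 else G *v x (real k * T))) (at_right (real k * T))"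
      using conjunct2[OF conjunct2[OF S]] by metis
    fix s assume s: "s \<in> {real k * T<..<real k * T+T}"
    have "A *v x s + Bc *v (Kc (s - real k * T) *v x s) = M (s - real k * T) *v x s"
      by (simp add: M_def mv_comb)
    thus "(x has_vector_derivative (M (s - real k * T) *v x s)) (at s)"
      using S s unfolding e by auto
  qed
  have part4: "closed_loop_positive A Bc J Bd Kc Kd T"
    unfolding closed_loop_positive_def
  proof (intro allI impI)
    fix x and t :: real
    assume H: "closed_loop_sol A Bc J Bd Kc Kd T x \<and> nonneg_vec (x 0)" and t: "t \<ge> 0"
    show "nonneg_vec (x t)"
    proof (cases "t = 0")
      case True thus ?thesis using H by simp
    next
      case False
      then obtain k where k: "real k * T < t" "t \<le> real (Suc k) * T"
        using find_k[of t T] t T_pos by auto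
      have "\<forall>s\<in>{real k * T<..real k * T+T}. \<forall>i. x s $ i \<ge> 0"
        using solp[of x] H
        by (intro closed_loop_pos[OF T_pos vc vdi metz' lt' vp Gnn]) (auto simp: nonneg_vec_def)
      thus ?thesis using k e[of k] by (auto simp: nonneg_vec_def)
    qed
  qed
  define \<mu> where "\<mu> = Min (range (\<lambda>i. v 0 $ i))"
  have mu_le: "\<mu> \<le> v 0 $ i" for i unfolding \<mu>_def by (rule Min_le) auto
  have mu_pos: "\<mu> > 0"
  proof -
    have "\<mu> \<in> range (\<lambda>i. v 0 $ i)" unfolding \<mu>_def by (rule Min_in) auto
    thus ?thesis using vp by auto
  qed
  define S where "S = (\<Sum>i\<in>UNIV. v 0 $ i)"
  have S_ge: "v 0 $ i \<le> S" for i
    unfolding S_def by (rule member_le_sum) (use vp in \<open>auto intro: less_imp_le\<close>)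
  have S_pos: "S > 0" using S_ge[of undefined] vp[of undefined] by simp
  define \<rho> where "\<rho> = max 0 (1 - \<epsilon> / S)"
  have rp: "\<rho> \<ge> 0" by (simp add: \<rho>_def)
  have r1: "\<rho> < 1" using S_pos eps_pos by (simp add: \<rho>_def)
  have GvT': "(G *v v T) $ i \<le> \<rho> * v 0 $ i" for i
  proof -
    have "\<epsilon> * v 0 $ i / S \<le> \<epsilon>" using S_ge[of i] S_pos eps_pos
      by (simp add: divide_le_eq)
    hence "v 0 $ i - \<epsilon> \<le> (1 - \<epsilon> / S) * v 0 $ i" by (simp add: algebra_simps)
    also have "\<dots> \<le> \<rho> * v 0 $ i" using vp[of i] by (intro mult_right_mono) (auto simp: \<rho>_def)
    finally show ?thesis using GvT C4'[of i] by simp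
  qed
  have "compact (v ` {0..T})" by (rule compact_continuous_image[OF vc compact_Icc])
  then obtain B0 where B0: "\<forall>z\<in>v ` {0..T}. norm z \<le> B0" using compact_imp_bounded bounded_iff by metis
  define B where "B = max B0 0"
  have vB: "v \<tau> $ i \<le> B" if "\<tau> \<in> {0..T}" for \<tau> i
  proof -
    have "v \<tau> $ i \<le> norm (v \<tau>)" using component_le_norm_cart[of "v \<tau>" i] by linarith
    thus ?thesis using B0 that by (force simp: B_def)
  qed
  have B0': "B \<ge> 0" by (simp add: B_def)
  define K where "K = real CARD('n) * B / \<mu>"
  have K0: "K \<ge> 0" using B0' mu_pos by (simp add: K_def)
  have bnd: "\<exists>k::nat. real k * T < t \<and> t \<le> real k * T + T \<and> norm (x t) \<le> K * \<rho>^k * norm (x 0)"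
    if sol: "closed_loop_sol A Bc J Bd Kc Kd T x" and t: "t > 0" for x t
  proof -
    obtain k where k: "real k * T < t" "t \<le> real (Suc k) * T"
      using find_k[OF t T_pos] by auto
    define c where "c = norm (x 0) / \<mu>"
    have cp: "c \<ge> 0" using mu_pos by (simp add: c_def)
    have x0: "\<bar>x 0 $ i\<bar> \<le> c * v 0 $ i" for i
    proof -
      have "\<bar>x 0 $ i\<bar> \<le> norm (x 0)" by (rule component_le_norm_cart)
      also have "\<dots> = c * \<mu>" using mu_pos by (simp add: c_def)
      also have "\<dots> \<le> c * v 0 $ i" by (rule mult_left_mono[OF mu_le cp])
      finally show ?thesis .
    qed
    have "\<forall>s\<in>{real k * T<..real k * T+T}. \<forall>i. \<bar>x s $ i\<bar> \<le> \<rho>^k * c * v (s - real k * T) $ i"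
    proof -
      have S3: "\<And>k::nat. continuous_on {real k * T<..real k * T+T} x"
        "\<And>k::nat. \<And>s. s \<in> {real k * T<..<real k * T+T} \<Longrightarrow>
              (x has_vector_derivative (M (s - real k * T) *v x s)) (at s)"
        "\<And>k::nat. (x \<longlongrightarrow> (if k = 0 then x 0 else G *v x (real k * T))) (at_right (real k * T))"
        using solp[OF sol] by blast+
      show ?thesis by (rule closed_loop_bounds[OF T_pos vc vdi metz' lt' vp Gnn GvT' rp S3 cp x0])
    qed
    hence xi: "\<bar>x t $ i\<bar> \<le> \<rho>^k * c * B" for i
    proof -
      assume H: "\<forall>s\<in>{real k * T<..real k * T+T}. \<forall>i. \<bar>x s $ i\<bar> \<le> \<rho>^k * c * v (s - real k * T) $ i"
      have tin: "t \<in> {real k * T<..real k * T+T}" using k e[of k] by simp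
      have "t - real k * T \<in> {0..T}" using tin by auto
      hence "v (t - real k * T) $ i \<le> B" by (rule vB)
      moreover have "\<rho>^k * c \<ge> 0" using rp cp by simp
      ultimately have "\<rho>^k * c * v (t - real k * T) $ i \<le> \<rho>^k * c * B" by (rule mult_left_mono)
      moreover have "\<bar>x t $ i\<bar> \<le> \<rho>^k * c * v (t - real k * T) $ i" using H tin by blast
      ultimately show ?thesis by linarith
    qed
    have "norm (x t) \<le> (\<Sum>i\<in>UNIV. \<bar>x t $ i\<bar>)" by (rule norm_le_l1_cart)
    also have "\<dots> \<le> (\<Sum>i\<in>(UNIV::'n set). \<rho>^k * c * B)" by (rule sum_mono[OF xi])
    also have "\<dots> = K * \<rho>^k * norm (x 0)" using mu_pos by (simp add: K_def c_def)
    finally show ?thesis using k e[of k] by auto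
  qed
  have part5: "closed_loop_GAS A Bc J Bd Kc Kd T"
    unfolding closed_loop_GAS_def
  proof (intro conjI allI impI)
    fix e :: real assume ep: "e > 0"
    show "\<exists>d>0. \<forall>x. closed_loop_sol A Bc J Bd Kc Kd T x \<and> norm (x 0) < d \<longrightarrow> (\<forall>t\<ge>0. norm (x t) < e)"
    proof (intro exI[of _ "e / (K + 1)"] conjI allI impI)
      show "e / (K + 1) > 0" using ep K0 by simp
      fix x and t :: real
      assume H: "closed_loop_sol A Bc J Bd Kc Kd T x \<and> norm (x 0) < e / (K + 1)" and t: "t \<ge> 0"
      have dle: "e / (K + 1) \<le> e" using ep K0 by (simp add: divide_le_eq)
      show "norm (x t) < e"
      proof (cases "t = 0")
        case True thus ?thesis using H dle by simp
      next
        case False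
        then obtain k where "norm (x t) \<le> K * \<rho>^k * norm (x 0)" using bnd[of x t] H t by force
        also have "\<dots> \<le> K * norm (x 0)"
          using K0 rp r1 by (intro mult_right_mono) (auto intro!: mult_left_le power_le_one)
        also have "\<dots> \<le> K * (e / (K + 1))" using H K0 by (intro mult_left_mono) auto
        also have "\<dots> < e" using K0 ep by (simp add: field_simps)
        finally show ?thesis .
      qed
    qed
  next
    fix x assume sol: "closed_loop_sol A Bc J Bd Kc Kd T x"
    show "(x \<longlongrightarrow> 0) at_top"
    proof (rule tendstoI)
      fix e :: real assume ep: "e > 0"
      have "(\<lambda>n. K * norm (x 0) * \<rho>^n) \<longlonglongrightarrow> 0"
        using rp r1 by (intro tendsto_mult_right_zero LIMSEQ_power_zero) auto
      from tendstoD[OF this ep] obtain N where N: "\<And>n. n \<ge> N \<Longrightarrow> \<bar>K * norm (x 0) * \<rho>^n\<bar> < e"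
        by (auto simp: eventually_sequentially)
      show "eventually (\<lambda>t. dist (x t) 0 < e) at_top"
        unfolding eventually_at_top_linorder
      proof (intro exI[of _ "real (Suc N) * T"] allI impI)
        fix t assume t: "t \<ge> real (Suc N) * T"
        hence tp: "t > 0" using T_pos by (smt (verit) mult_pos_pos of_nat_0_less_iff zero_less_Suc)
        obtain k where k: "real k * T < t" "t \<le> real k * T + T" "norm (x t) \<le> K * \<rho>^k * norm (x 0)"
          using bnd[OF sol tp] by auto
        have "real (Suc N) * T \<le> real k * T + T" using t k by linarith
        hence "real N * T \<le> real k * T" by (simp add: algebra_simps)
        hence "real N \<le> real k" using T_pos by simp
        hence kN: "k \<ge> N" by simp
        have "norm (x t) \<le> K * norm (x 0) * \<rho>^N"
        proof -
          have "\<rho>^k \<le> \<rho>^N" using rp r1 kN by (intro power_decreasing) auto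
          hence "K * norm (x 0) * \<rho>^k \<le> K * norm (x 0) * \<rho>^N" using K0 by (intro mult_left_mono) auto
          thus ?thesis using k(3) by (simp add: algebra_simps)
        qed
        also have "\<dots> < e" using N[OF order_refl] by simp
        finally show "dist (x t) 0 < e" by simp
      qed
    qed
  qed
  show ?thesis using part1 part2 part3 part4 part5 by blast
qed


end
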